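(* Let $X$ and $Y$ be nontrivial real Banach spaces. (a) If $X^*$ has the weak$^*$ local diameter $2$ property, then $(X\oplus_1 Y)^*$ has the weak$^*$ local diameter $2$ property. (b) If $X^*$ and $Y^*$ have the weak$^*$ local diameter $2$ property and $1<p\leq\infty$, then $(X\oplus_p Y)^*$ has the weak$^*$ local diameter $2$ property. (c) If $(X\oplus_p Y)^*$ has the weak$^*$ local diameter $2$ property, where $1<p\leq\infty$, then $X^*$ has the weak$^*$ local diameter $2$ property.
   Context: For $1\le p<\infty$, $X\oplus_p Y$ is $X\times Y$ with norm $(\|x\|^p+\|y\|^p)^{1/p}$; $X\oplus_\infty Y$ has norm $\max\{\|x\|,\|y\|\}$. For a Banach space $Z$, a weak$^*$ slice of $B_{Z^*}$ is a set $\{z^*\in B_{Z^*}: z^*(z)>1-\alpha\}$ with $z\in S_Z$, $\alpha>0$; $Z^*$ has the weak$^*$ local diameter $2$ property if every weak$^*$ slice of $B_{Z^*}$ has diameter $2$. *)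

theory Defs
  imports "HOL-Analysis.Analysis"
begin

text \<open>A normed space is represented by a real vector space together with a norm
function N. Its dual consists of the linear functionals bounded w.r.t. N.\<close>

definition bounded_wrt :: "('v::real_vector \<Rightarrow> real) \<Rightarrow> ('v \<Rightarrow> real) \<Rightarrow> bool" where
  "bounded_wrt N f \<longleftrightarrow> linear f \<and> (\<exists>K. \<forall>x. \<bar>f x\<bar> \<le> K * N x)"

definition dual_norm :: "('v::real_vector \<Rightarrow> real) \<Rightarrow> ('v \<Rightarrow> real) \<Rightarrow> real" where
  "dual_norm N f = (SUP x\<in>{x. N x \<le> 1}. \<bar>f x\<bar>)"

definition dual_ball :: "('v::real_vector \<Rightarrow> real) \<Rightarrow> ('v \<Rightarrow> real) set" where
  "dual_ball N = {f. bounded_wrt N f \<and> dual_norm N f \<le> 1}"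

definition wstar_slice :: "('v::real_vector \<Rightarrow> real) \<Rightarrow> 'v \<Rightarrow> real \<Rightarrow> ('v \<Rightarrow> real) set" where
  "wstar_slice N z \<alpha> = {f \<in> dual_ball N. f z > 1 - \<alpha>}"

definition dual_diam :: "('v::real_vector \<Rightarrow> real) \<Rightarrow> ('v \<Rightarrow> real) set \<Rightarrow> real" where
  "dual_diam N S = (SUP (f, g)\<in>S \<times> S. dual_norm N (\<lambda>x. f x - g x))"

definition wstar_LD2P :: "('v::real_vector \<Rightarrow> real) \<Rightarrow> bool" where
  "wstar_LD2P N \<longleftrightarrow>
     (\<forall>z \<alpha>. N z = 1 \<longrightarrow> \<alpha> > 0 \<longrightarrow> dual_diam N (wstar_slice N z \<alpha>) = 2)"

definition psum_norm :: "ereal \<Rightarrow> ('a::real_normed_vector \<times> 'b::real_normed_vector) \<Rightarrow> real" where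
  "psum_norm p v = (if p = \<infinity> then max (norm (fst v)) (norm (snd v))
     else (norm (fst v) powr real_of_ereal p + norm (snd v) powr real_of_ereal p)
            powr (1 / real_of_ereal p))"

end

theory Submission
  imports Defs "HOL-Analysis.Analysis"
begin


definition goodG :: "'a::real_normed_vector \<Rightarrow> ('a \<times> real) set \<Rightarrow> bool" where
  "goodG x0 G \<longleftrightarrow> (0,0) \<in> G \<and> (\<forall>p\<in>G. \<forall>q\<in>G. p + q \<in> G) \<and> (\<forall>c. \<forall>p\<in>G. c *\<^sub>R p \<in> G)
     \<and> (\<forall>v r s. (v,r) \<in> G \<longrightarrow> (v,s) \<in> G \<longrightarrow> r = s) \<and> (\<forall>v r. (v,r) \<in> G \<longrightarrow> r \<le> norm v)
     \<and> (x0, norm x0) \<in> G"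

lemma goodG_D:
  assumes "goodG x0 G"
  shows goodG_0: "(0,0) \<in> G" and goodG_add: "p \<in> G \<Longrightarrow> q \<in> G \<Longrightarrow> p + q \<in> G"
    and goodG_sc: "p \<in> G \<Longrightarrow> c *\<^sub>R p \<in> G"
    and goodG_fn: "(v,r) \<in> G \<Longrightarrow> (v,s) \<in> G \<Longrightarrow> r = s"
    and goodG_dom: "(v,r) \<in> G \<Longrightarrow> r \<le> norm v"
    and goodG_x0: "(x0, norm x0) \<in> G"
  using assms unfolding goodG_def by blast+

lemma goodG_init:
  fixes x0 :: "'a::real_normed_vector"
  shows "goodG x0 {(t *\<^sub>R x0, t * norm x0) | t. True}"
  unfolding goodG_def
proof (intro conjI allI impI ballI)
  show "(0, 0) \<in> {(t *\<^sub>R x0, t * norm x0) |t. True}" by (rule CollectI, rule exI[of _ 0]) auto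
  show "(x0, norm x0) \<in> {(t *\<^sub>R x0, t * norm x0) |t. True}" by (rule CollectI, rule exI[of _ 1]) auto
next
  fix p q assume "p \<in> {(t *\<^sub>R x0, t * norm x0) |t. True}" "q \<in> {(t *\<^sub>R x0, t * norm x0) |t. True}"
  then obtain t s where "p = (t *\<^sub>R x0, t * norm x0)" "q = (s *\<^sub>R x0, s * norm x0)" by auto
  then show "p + q \<in> {(t *\<^sub>R x0, t * norm x0) |t. True}"
    by (intro CollectI exI[of _ "t+s"]) (auto simp: algebra_simps scaleR_add_left)
next
  fix c p assume "p \<in> {(t *\<^sub>R x0, t * norm x0) |t. True}"
  then obtain t where "p = (t *\<^sub>R x0, t * norm x0)" by auto
  then show "c *\<^sub>R p \<in> {(t *\<^sub>R x0, t * norm x0) |t. True}"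
    by (intro CollectI exI[of _ "c*t"]) auto
next
  fix v r s assume "(v, r) \<in> {(t *\<^sub>R x0, t * norm x0) |t. True}" "(v, s) \<in> {(t *\<^sub>R x0, t * norm x0) |t. True}"
  then obtain t t' where A: "v = t *\<^sub>R x0" "r = t * norm x0" and B: "v = t' *\<^sub>R x0" "s = t' * norm x0"
    by blast
  show "r = s"
  proof (cases "x0 = 0")
    case True then show ?thesis using A B by simp
  next
    case False
    have "t = t'" using A(1) B(1) False by (metis scaleR_cancel_right)
    then show ?thesis using A B by simp
  qed
next
  fix v r assume "(v, r) \<in> {(t *\<^sub>R x0, t * norm x0) |t. True}"
  then obtain t where "v = t *\<^sub>R x0" "r = t * norm x0" by auto
  then show "r \<le> norm v" by (auto intro: mult_right_mono)
qed

lemma goodG_chain: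
  assumes C: "C \<in> chains {G. goodG x0 G}" and ne: "C \<noteq> {}"
  shows "goodG x0 (\<Union>C)"
proof -
  have g: "\<And>G. G \<in> C \<Longrightarrow> goodG x0 G" using chainsD2[OF C] by auto
  have ch: "\<And>G H. G \<in> C \<Longrightarrow> H \<in> C \<Longrightarrow> G \<subseteq> H \<or> H \<subseteq> G" using chainsD[OF C] by blast
  obtain G0 where G0: "G0 \<in> C" using ne by auto
  show ?thesis unfolding goodG_def
  proof (intro conjI allI impI ballI)
    show "(0,0) \<in> \<Union>C" using goodG_0[OF g[OF G0]] G0 by auto
    show "(x0, norm x0) \<in> \<Union>C" using goodG_x0[OF g[OF G0]] G0 by auto
  next
    fix p q assume "p \<in> \<Union>C" "q \<in> \<Union>C"
    then obtain G H where "G \<in> C" "H \<in> C" "p \<in> G" "q \<in> H" by auto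
    then have "(p \<in> G \<and> q \<in> G) \<or> (p \<in> H \<and> q \<in> H)" using ch[of G H] by blast
    then show "p + q \<in> \<Union>C" using goodG_add[OF g[OF \<open>G\<in>C\<close>]] goodG_add[OF g[OF \<open>H\<in>C\<close>]] \<open>G\<in>C\<close> \<open>H\<in>C\<close> by blast
  next
    fix c p assume "p \<in> \<Union>C"
    then obtain G where "G \<in> C" "p \<in> G" by auto
    then show "c *\<^sub>R p \<in> \<Union>C" using goodG_sc[OF g[OF \<open>G\<in>C\<close>]] by blast
  next
    fix v r s assume "(v, r) \<in> \<Union>C" "(v, s) \<in> \<Union>C"
    then obtain G H where "G \<in> C" "H \<in> C" "(v,r) \<in> G" "(v,s) \<in> H" by auto
    then have "((v,r) \<in> G \<and> (v,s) \<in> G) \<or> ((v,r) \<in> H \<and> (v,s) \<in> H)" using ch[of G H] by blast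
    then show "r = s" using goodG_fn[OF g[OF \<open>G\<in>C\<close>]] goodG_fn[OF g[OF \<open>H\<in>C\<close>]] by blast
  next
    fix v r assume "(v, r) \<in> \<Union>C"
    then obtain G where "G \<in> C" "(v,r) \<in> G" by auto
    then show "r \<le> norm v" using goodG_dom[OF g[OF \<open>G\<in>C\<close>]] by blast
  qed
qed

lemma goodG_extend:
  fixes x0 :: "'a::real_normed_vector"
  assumes M: "goodG x0 M" and y: "y \<notin> fst ` M"
  shows "\<exists>M'. goodG x0 M' \<and> M \<subseteq> M' \<and> M' \<noteq> M"
proof -
  have add: "\<And>v r w s. (v,r)\<in>M \<Longrightarrow> (w,s)\<in>M \<Longrightarrow> (v+w, r+s) \<in> M"
    using goodG_add[OF M] by (metis add_Pair)
  have sc: "\<And>c v r. (v,r)\<in>M \<Longrightarrow> (c *\<^sub>R v, c * r) \<in> M"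
    using goodG_sc[OF M] by (metis scaleR_Pair real_scaleR_def)
  have dom: "\<And>v r. (v,r)\<in>M \<Longrightarrow> r \<le> norm v" using goodG_D[OF M] by blast
  have fn: "\<And>v r s. (v,r)\<in>M \<Longrightarrow> (v,s)\<in>M \<Longrightarrow> r = s" using goodG_D[OF M] by blast
  have z: "(0,0) \<in> M" using goodG_D[OF M] by blast
  define S where "S = {a - norm (u - y) | u a. (u,a) \<in> M}"
  define c where "c = Sup S"
  have key: "a - norm (u - y) \<le> norm (w + y) - b" if "(u,a)\<in>M" "(w,b)\<in>M" for u a w b
  proof -
    have "a + b \<le> norm (u + w)" using dom[OF add[OF that]] .
    also have "\<dots> = norm ((u - y) + (w + y))" by (simp add: algebra_simps)
    also have "\<dots> \<le> norm (u - y) + norm (w + y)" by (rule norm_triangle_ineq)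
    finally show ?thesis by simp
  qed
  have Sne: "S \<noteq> {}" using z unfolding S_def by blast
  have Sbdd: "bdd_above S" unfolding S_def bdd_above_def using key z by blast
  have c1: "a - norm (u - y) \<le> c" if "(u,a)\<in>M" for u a
    unfolding c_def using that Sbdd by (intro cSup_upper) (auto simp: S_def)
  have c2: "c \<le> norm (w + y) - b" if "(w,b)\<in>M" for w b
    unfolding c_def using that Sne key by (intro cSup_least) (auto simp: S_def)
  define M' where "M' = {(v + t *\<^sub>R y, r + t * c) | v r t. (v,r) \<in> M}"
  have inM': "(v + t *\<^sub>R y, r + t * c) \<in> M'" if "(v,r)\<in>M" for v r t
    using that unfolding M'_def by blast
  have sub: "M \<subseteq> M'"
  proof
    fix p assume "p \<in> M" then obtain v r where "p = (v,r)" "(v,r)\<in>M" by (cases p) auto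
    then show "p \<in> M'" using inM'[of v r 0] by simp
  qed
  have new: "(y, c) \<in> M'" using inM'[OF z, of 1] by simp
  have "(y,c) \<notin> M" using y by force
  then have neq: "M' \<noteq> M" using new by blast
  have "goodG x0 M'" unfolding goodG_def
  proof (intro conjI allI impI ballI)
    show "(0,0) \<in> M'" using inM'[OF z, of 0] by simp
    show "(x0, norm x0) \<in> M'" using sub goodG_x0[OF M] by blast
  next
    fix p q assume "p \<in> M'" "q \<in> M'"
    then obtain v r t w s u where "p = (v + t *\<^sub>R y, r + t * c)" "(v,r)\<in>M"
      "q = (w + u *\<^sub>R y, s + u * c)" "(w,s)\<in>M" unfolding M'_def by blast
    then show "p + q \<in> M'" using inM'[OF add, of v r w s "t+u"]
      by (simp add: algebra_simps scaleR_add_left)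
  next
    fix a p assume "p \<in> M'"
    then obtain v r t where "p = (v + t *\<^sub>R y, r + t * c)" "(v,r)\<in>M" unfolding M'_def by blast
    then show "a *\<^sub>R p \<in> M'" using inM'[OF sc, of v r a "a*t"]
      by (simp add: algebra_simps)
  next
    fix w r s assume "(w, r) \<in> M'" "(w, s) \<in> M'"
    then obtain v1 r1 t1 v2 r2 t2 where e: "w = v1 + t1 *\<^sub>R y" "r = r1 + t1 * c" "(v1,r1)\<in>M"
      "w = v2 + t2 *\<^sub>R y" "s = r2 + t2 * c" "(v2,r2)\<in>M" unfolding M'_def by blast
    have "t1 = t2"
    proof (rule ccontr)
      assume ne: "t1 \<noteq> t2"
      have h: "(t1 - t2) *\<^sub>R y = v2 - v1" using e by (simp add: algebra_simps scaleR_diff_left)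
      have "y = (1/(t1-t2)) *\<^sub>R ((t1 - t2) *\<^sub>R y)" using ne by simp
      then have "y = (1/(t1-t2)) *\<^sub>R (v2 - v1)" using h by simp
      moreover have "((1/(t1-t2)) *\<^sub>R (v2 - v1), (1/(t1-t2)) * (r2 - r1)) \<in> M"
      proof -
        have "(v2 - v1, r2 - r1) \<in> M" using add[OF e(6) sc[OF e(3), of "-1"]] by simp
        then show ?thesis by (rule sc)
      qed
      ultimately show False using y by force
    qed
    then have "v1 = v2" using e by simp
    then show "r = s" using e fn \<open>t1 = t2\<close> by blast
  next
    fix w r assume "(w, r) \<in> M'"
    then obtain v r0 t where e: "w = v + t *\<^sub>R y" "r = r0 + t * c" "(v,r0)\<in>M" unfolding M'_def by blast
    show "r \<le> norm w"
    proof (cases "t > 0")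
      case True
      have "c \<le> norm ((1/t) *\<^sub>R v + y) - (1/t) * r0" using c2[OF sc[OF e(3), of "1/t"]] .
      then have "t * c \<le> t * norm ((1/t) *\<^sub>R v + y) - r0" using True
        by (simp add: field_simps)
      also have "t * norm ((1/t) *\<^sub>R v + y) = norm (t *\<^sub>R ((1/t) *\<^sub>R v + y))" using True by simp
      also have "t *\<^sub>R ((1/t) *\<^sub>R v + y) = w" using True e by (simp add: scaleR_add_right)
      finally show ?thesis using e by simp
    next
      case False
      show ?thesis
      proof (cases "t = 0")
        case True then show ?thesis using e dom by simp
      next
        case False
        with \<open>\<not> t > 0\<close> have s: "-t > 0" by simp
        have "(1/(-t)) * r0 - norm ((1/(-t)) *\<^sub>R v - y) \<le> c" using c1[OF sc[OF e(3), of "1/(-t)"]] .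
        then have A: "r0 - (-t) * c \<le> (-t) * norm ((1/(-t)) *\<^sub>R v - y)" using s
          by (simp add: field_simps)
        have B: "(-t) * norm ((1/(-t)) *\<^sub>R v - y) = norm ((-t) *\<^sub>R ((1/(-t)) *\<^sub>R v - y))" using s by simp
        have C: "(-t) *\<^sub>R ((1/(-t)) *\<^sub>R v - y) = w" using s e by (simp add: scaleR_diff_right)
        from A have "r0 - (-t) * c \<le> norm w" unfolding B C .
        then show ?thesis using e by simp
      qed
    qed
  qed
  then show ?thesis using sub neq by blast
qed

lemma norming_functional:
  fixes x0 :: "'a::real_normed_vector"
  shows "\<exists>f. linear f \<and> (\<forall>v. \<bar>f v\<bar> \<le> norm v) \<and> f x0 = norm x0"
proof -
  have "\<forall>C\<in>chains {G. goodG x0 G}. \<exists>U\<in>{G. goodG x0 G}. \<forall>X\<in>C. X \<subseteq> U"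
  proof
    fix C assume C: "C \<in> chains {G. goodG x0 G}"
    show "\<exists>U\<in>{G. goodG x0 G}. \<forall>X\<in>C. X \<subseteq> U"
    proof (cases "C = {}")
      case True then show ?thesis using goodG_init[of x0] by blast
    next
      case False then show ?thesis using goodG_chain[OF C] by blast
    qed
  qed
  from Zorn_Lemma2[OF this] obtain M where M: "goodG x0 M"
    and max: "\<And>X. goodG x0 X \<Longrightarrow> M \<subseteq> X \<Longrightarrow> X = M" by blast
  have full: "\<And>v. v \<in> fst ` M"
    using goodG_extend[OF M] max by blast
  have fn: "\<And>v r s. (v,r)\<in>M \<Longrightarrow> (v,s)\<in>M \<Longrightarrow> r = s" using goodG_D[OF M] by blast
  define f where "f v = (THE r. (v,r) \<in> M)" for v
  have fM: "(v, f v) \<in> M" for v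
  proof -
    obtain r where "(v,r) \<in> M" using full[of v] by force
    then show ?thesis unfolding f_def using fn by (metis theI)
  qed
  have fval: "(v,r) \<in> M \<Longrightarrow> f v = r" for v r using fM fn by blast
  have add: "\<And>v r w s. (v,r)\<in>M \<Longrightarrow> (w,s)\<in>M \<Longrightarrow> (v+w, r+s) \<in> M"
    using goodG_add[OF M] by (metis add_Pair)
  have sc: "\<And>c v r. (v,r)\<in>M \<Longrightarrow> (c *\<^sub>R v, c * r) \<in> M"
    using goodG_sc[OF M] by (metis scaleR_Pair real_scaleR_def)
  have dom: "\<And>v r. (v,r)\<in>M \<Longrightarrow> r \<le> norm v" using goodG_D[OF M] by blast
  have lin: "linear f"
    by (rule linearI) (auto intro!: fval add sc fM)
  have le: "f v \<le> norm v" for v using dom[OF fM] .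
  have "\<bar>f v\<bar> \<le> norm v" for v
  proof -
    have "- f v = f (- v)" using linear_neg[OF lin] by simp
    then show ?thesis using le[of v] le[of "-v"] by simp
  qed
  moreover have "f x0 = norm x0" using goodG_x0[OF M] fval by blast
  ultimately show ?thesis using lin by blast
qed



definition phi :: "ereal \<Rightarrow> real \<Rightarrow> real \<Rightarrow> real" where
  "phi p a b = (if p = \<infinity> then max a b
     else (a powr real_of_ereal p + b powr real_of_ereal p) powr (1 / real_of_ereal p))"

lemma psum_norm_phi: "psum_norm p v = phi p (norm (fst v)) (norm (snd v))"
  unfolding psum_norm_def phi_def by simp

lemma preal: assumes "1 \<le> p" "p \<noteq> \<infinity>" shows "1 \<le> real_of_ereal p"
  using assms by (cases p) auto

definition psi :: "real \<Rightarrow> real \<Rightarrow> real \<Rightarrow> real" where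
  "psi r a b = (a powr r + b powr r) powr (1 / r)"

lemma phi_psi: "p \<noteq> \<infinity> \<Longrightarrow> phi p a b = psi (real_of_ereal p) a b"
  unfolding phi_def psi_def by simp

lemma phi_inf: "phi \<infinity> a b = max a b" unfolding phi_def by simp

lemma psi_nonneg: "0 \<le> psi r a b" unfolding psi_def by simp

lemma psi_ge1: assumes "r \<ge> 1" "0 \<le> a" "0 \<le> b" shows "a \<le> psi r a b"
proof -
  have "a = (a powr r) powr (1/r)" using assms by (simp add: powr_powr)
  also have "\<dots> \<le> psi r a b" unfolding psi_def using assms
    by (intro powr_mono2) auto
  finally show ?thesis .
qed

lemma psi_ge2: assumes "r \<ge> 1" "0 \<le> a" "0 \<le> b" shows "b \<le> psi r a b"
proof -
  have "b = (b powr r) powr (1/r)" using assms by (simp add: powr_powr)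
  also have "\<dots> \<le> psi r a b" unfolding psi_def using assms
    by (intro powr_mono2) auto
  finally show ?thesis .
qed

lemma psi_zero2: assumes "r \<ge> 1" "0 \<le> a" shows "psi r a 0 = a"
  using assms unfolding psi_def by (simp add: powr_powr)

lemma psi_mono: assumes "r \<ge> 1" "0 \<le> a" "a \<le> a'" "0 \<le> b" "b \<le> b'"
  shows "psi r a b \<le> psi r a' b'"
  unfolding psi_def using assms
  by (intro powr_mono2 add_mono) auto

lemma psi_homog: assumes "r \<ge> 1" "0 \<le> c" "0 \<le> a" "0 \<le> b"
  shows "psi r (c * a) (c * b) = c * psi r a b"
proof -
  have "(c * a) powr r + (c * b) powr r = c powr r * (a powr r + b powr r)"
    using assms by (simp add: powr_mult algebra_simps)
  then have "psi r (c * a) (c * b) = (c powr r) powr (1/r) * (a powr r + b powr r) powr (1/r)"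
    unfolding psi_def using assms by (simp add: powr_mult)
  also have "(c powr r) powr (1/r) = c" using assms by (simp add: powr_powr)
  finally show ?thesis unfolding psi_def .
qed

lemma phi_nonneg: "0 \<le> a \<Longrightarrow> 0 \<le> phi p a b"
  unfolding phi_def by (auto simp: max_def)

lemma phi_ge1: "1 \<le> p \<Longrightarrow> 0 \<le> a \<Longrightarrow> 0 \<le> b \<Longrightarrow> a \<le> phi p a b"
  by (cases "p = \<infinity>") (auto simp: phi_inf phi_psi preal psi_ge1)

lemma phi_ge2: "1 \<le> p \<Longrightarrow> 0 \<le> a \<Longrightarrow> 0 \<le> b \<Longrightarrow> b \<le> phi p a b"
  by (cases "p = \<infinity>") (auto simp: phi_inf phi_psi preal psi_ge2)

lemma phi_zero2: "1 \<le> p \<Longrightarrow> 0 \<le> a \<Longrightarrow> phi p a 0 = a"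
  by (cases "p = \<infinity>") (auto simp: phi_inf phi_psi preal psi_zero2)

lemma phi_mono: "1 \<le> p \<Longrightarrow> 0 \<le> a \<Longrightarrow> a \<le> a' \<Longrightarrow> 0 \<le> b \<Longrightarrow> b \<le> b' \<Longrightarrow> phi p a b \<le> phi p a' b'"
  by (cases "p = \<infinity>") (auto simp: phi_inf phi_psi preal psi_mono)

lemma phi_homog: "1 \<le> p \<Longrightarrow> 0 \<le> c \<Longrightarrow> 0 \<le> a \<Longrightarrow> 0 \<le> b \<Longrightarrow> phi p (c * a) (c * b) = c * phi p a b"
  by (cases "p = \<infinity>") (auto simp: phi_inf phi_psi preal psi_homog max_mult_distrib_left)

lemma phi_one: "phi 1 a b = a powr 1 + b powr 1"
  unfolding phi_def by simp

lemma phi_one': "0 \<le> a \<Longrightarrow> 0 \<le> b \<Longrightarrow> phi 1 a b = a + b"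
  unfolding phi_one by simp



lemma psi_sum: assumes "r \<ge> 1" "0 \<le> s1" "0 \<le> s2" "psi r s1 s2 = L"
  shows "s1 powr r + s2 powr r = L powr r"
proof -
  have "L powr r = ((s1 powr r + s2 powr r) powr (1/r)) powr r" using assms unfolding psi_def by simp
  also have "\<dots> = s1 powr r + s2 powr r" using assms by (simp add: powr_powr)
  finally show ?thesis by simp
qed

lemma psi_dual:
  assumes r: "r > 1" and s: "0 \<le> s1" "0 \<le> s2" "psi r s1 s2 = 1"
  shows "\<exists>a b. 0 \<le> a \<and> 0 \<le> b \<and> a * s1 + b * s2 = 1 \<and>
           (\<forall>c d. 0 \<le> c \<longrightarrow> 0 \<le> d \<longrightarrow> a * c + b * d \<le> psi r c d)"
proof -
  define q where "q = r / (r - 1)"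
  have q1: "q > 1" using r unfolding q_def by (simp add: field_simps)
  have pq: "1/r + 1/q = 1" using r unfolding q_def by (simp add: field_simps)
  have rq: "(r - 1) * q = r" using r unfolding q_def by (simp add: field_simps)
  define a where "a = s1 powr (r - 1)"
  define b where "b = s2 powr (r - 1)"
  have sum1: "s1 powr r + s2 powr r = 1" using psi_sum[OF _ s] r by simp
  have aq: "a powr q = s1 powr r" unfolding a_def by (simp add: powr_powr rq)
  have bq: "b powr q = s2 powr r" unfolding b_def by (simp add: powr_powr rq)
  have as1: "a * s1 = s1 powr r"
  proof (cases "s1 = 0")
    case False then show ?thesis unfolding a_def using s by (simp add: powr_diff)
  qed (simp add: a_def)
  have bs2: "b * s2 = s2 powr r"
  proof (cases "s2 = 0")
    case False then show ?thesis unfolding b_def using s by (simp add: powr_diff)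
  qed (simp add: b_def)
  have key: "a * c + b * d \<le> psi r c d" if c: "0 \<le> c" "0 \<le> d" for c d
  proof (cases "psi r c d = 0")
    case True
    have "c \<le> 0" "d \<le> 0" using psi_ge1[of r c d] psi_ge2[of r c d] True r c by auto
    then show ?thesis using c True by simp
  next
    case False
    define L where "L = psi r c d"
    have L: "L > 0" using False psi_nonneg[of r c d] unfolding L_def by linarith
    have cdsum: "c powr r + d powr r = L powr r" using psi_sum[OF _ c] r L_def by simp
    have "(c/L) powr r + (d/L) powr r = (c powr r + d powr r) / L powr r"
      using L c by (simp add: powr_divide add_divide_distrib)
    also have "\<dots> = 1" using cdsum L by simp
    finally have cd1: "(c/L) powr r + (d/L) powr r = 1" .
    have y1: "a * (c/L) \<le> a powr q / q + (c/L) powr r / r"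
      using Youngs_inequality[of q r a "c/L"] q1 r pq L c unfolding a_def by (simp add: add.commute)
    have y2: "b * (d/L) \<le> b powr q / q + (d/L) powr r / r"
      using Youngs_inequality[of q r b "d/L"] q1 r pq L c unfolding b_def by (simp add: add.commute)
    have "a * (c/L) + b * (d/L) \<le> (a powr q + b powr q) / q + ((c/L) powr r + (d/L) powr r) / r"
      using y1 y2 by (simp add: add_divide_distrib)
    also have "\<dots> = 1/q + 1/r" using aq bq sum1 cd1 by simp
    also have "\<dots> = 1" using pq by simp
    finally have "(a * c + b * d) / L \<le> 1" by (simp add: add_divide_distrib)
    then show ?thesis using L unfolding L_def by (simp add: divide_le_eq)
  qed
  have "0 \<le> a" "0 \<le> b" unfolding a_def b_def by simp_all
  moreover have "a * s1 + b * s2 = 1" using as1 bs2 sum1 by simp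
  ultimately show ?thesis using key by blast
qed

lemma phi_dual:
  assumes p: "1 < p" and s: "0 \<le> s1" "0 \<le> s2" "phi p s1 s2 = 1"
  shows "\<exists>a b. 0 \<le> a \<and> 0 \<le> b \<and> a * s1 + b * s2 = 1 \<and>
           (\<forall>c d. 0 \<le> c \<longrightarrow> 0 \<le> d \<longrightarrow> a * c + b * d \<le> phi p c d)"
proof (cases "p = \<infinity>")
  case True
  show ?thesis
  proof (cases "s1 = 1")
    case True then show ?thesis using \<open>p = \<infinity>\<close> by (intro exI[of _ 1] exI[of _ 0]) (auto simp: phi_inf)
  next
    case False
    then have "s2 = 1" using s True by (auto simp: phi_inf max_def split: if_splits)
    then show ?thesis using \<open>p = \<infinity>\<close> by (intro exI[of _ 0] exI[of _ 1]) (auto simp: phi_inf)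
  qed
next
  case False
  have r: "real_of_ereal p > 1" using p False by (cases p) auto
  show ?thesis using psi_dual[OF r s(1,2)] s(3) False by (simp add: phi_psi)
qed

lemma psi_small:
  assumes r: "r > 1" and e: "\<eta> > 0"
  shows "\<exists>t. 0 < t \<and> t \<le> 1 \<and> (\<forall>s. 0 \<le> s \<longrightarrow> s \<le> t \<longrightarrow> psi r 1 s \<le> 1 + \<eta> * t)"
proof -
  define t where "t = min 1 (\<eta> powr (1/(r-1)))"
  have t0: "0 < t" "t \<le> 1" unfolding t_def using e by auto
  have tr: "t powr (r - 1) \<le> \<eta>"
  proof -
    have "t powr (r-1) \<le> (\<eta> powr (1/(r-1))) powr (r-1)"
      using t0 r by (intro powr_mono2) (auto simp: t_def)
    also have "\<dots> = \<eta>" using r e by (simp add: powr_powr)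
    finally show ?thesis .
  qed
  have "psi r 1 s \<le> 1 + \<eta> * t" if s: "0 \<le> s" "s \<le> t" for s
  proof -
    have "psi r 1 s = (1 + s powr r) powr (1/r)" unfolding psi_def by simp
    also have "\<dots> \<le> (1 + s powr r) powr 1"
      using r by (intro powr_mono) auto
    also have "\<dots> = 1 + s powr r" by simp
    also have "s powr r \<le> t powr r" using s r by (intro powr_mono2) auto
    also have "t powr r = t * t powr (r - 1)" using t0 by (simp add: powr_diff)
    also have "\<dots> \<le> t * \<eta>" using tr t0 by (intro mult_left_mono) auto
    finally show ?thesis by (simp add: mult.commute)
  qed
  then show ?thesis using t0 by blast
qed

lemma phi_small:
  assumes p: "1 < p" and e: "\<eta> > 0"
  shows "\<exists>t. 0 < t \<and> t \<le> 1 \<and> (\<forall>s. 0 \<le> s \<longrightarrow> s \<le> t \<longrightarrow> phi p 1 s \<le> 1 + \<eta> * t)"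
proof (cases "p = \<infinity>")
  case True
  then show ?thesis using e by (intro exI[of _ 1]) (auto simp: phi_inf)
next
  case False
  have r: "real_of_ereal p > 1" using p False by (cases p) auto
  show ?thesis using psi_small[OF r e] False by (simp add: phi_psi)
qed



definition homN :: "('v::real_vector \<Rightarrow> real) \<Rightarrow> bool" where
  "homN N \<longleftrightarrow> (\<forall>c v. N (c *\<^sub>R v) = \<bar>c\<bar> * N v) \<and> (\<forall>v. 0 \<le> N v)"

lemma homN_scale: "homN N \<Longrightarrow> N (c *\<^sub>R v) = \<bar>c\<bar> * N v" unfolding homN_def by blast
lemma homN_nonneg: "homN N \<Longrightarrow> 0 \<le> N v" unfolding homN_def by blast
lemma homN_zero: "homN N \<Longrightarrow> N 0 = 0" using homN_scale[of N 0 0] by simp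
lemma homN_neg: "homN N \<Longrightarrow> N (- v) = N v" using homN_scale[of N "-1" v] by simp

lemma homN_norm: "homN norm" unfolding homN_def by simp

lemma lin_scale: "linear f \<Longrightarrow> f (c *\<^sub>R v) = c * (f v :: real)"
  using linear_scale[of f c v] by simp

lemma dn_ge':
  assumes "homN N" "\<And>x. N x \<le> 1 \<Longrightarrow> \<bar>h x\<bar> \<le> B" "N x \<le> 1"
  shows "\<bar>h x\<bar> \<le> dual_norm N h"
  unfolding dual_norm_def using assms
  by (intro cSUP_upper) (auto simp: bdd_above_def)

lemma dn_le:
  assumes "homN N" "\<And>x. N x \<le> 1 \<Longrightarrow> \<bar>h x\<bar> \<le> c"
  shows "dual_norm N h \<le> c"
proof -
  have "0 \<in> {x. N x \<le> 1}" using homN_zero[OF assms(1)] by simp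
  then show ?thesis unfolding dual_norm_def using assms by (intro cSUP_least) auto
qed

lemma bw_bound1:
  assumes "homN N" "bounded_wrt N f" "N x \<le> 1"
  shows "\<bar>f x\<bar> \<le> dual_norm N f"
proof -
  obtain K where K: "\<And>x. \<bar>f x\<bar> \<le> K * N x" using assms(2) unfolding bounded_wrt_def by blast
  have "\<bar>f x\<bar> \<le> max K 0" if "N x \<le> 1" for x
  proof -
    have "K * N x \<le> max K 0"
      using that homN_nonneg[OF assms(1), of x]
      by (cases "K \<ge> 0") (auto intro: mult_left_le mult_nonpos_nonneg order.trans[OF _ max.cobounded1] simp: max_def mult_le_cancel_left1)
    then show ?thesis using K[of x] by linarith
  qed
  then show ?thesis using dn_ge'[OF assms(1) _ assms(3)] by blast
qed

lemma bw_bound: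
  assumes N: "homN N" and f: "bounded_wrt N f"
  shows "\<bar>f v\<bar> \<le> dual_norm N f * N v"
proof (cases "N v = 0")
  case True
  obtain K where K: "\<And>x. \<bar>f x\<bar> \<le> K * N x" using f unfolding bounded_wrt_def by blast
  show ?thesis using K[of v] True by simp
next
  case False
  have pos: "N v > 0" using False homN_nonneg[OF N, of v] by linarith
  have lin: "linear f" using f unfolding bounded_wrt_def by blast
  have "N ((1 / N v) *\<^sub>R v) = 1" using homN_scale[OF N] pos by simp
  then have "\<bar>f ((1 / N v) *\<^sub>R v)\<bar> \<le> dual_norm N f" using bw_bound1[OF N f] by simp
  then have "\<bar>f v\<bar> / N v \<le> dual_norm N f" using lin_scale[OF lin] pos by (simp add: abs_mult)
  then show ?thesis using pos by (simp add: divide_le_eq)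
qed

lemma ball_bound:
  assumes N: "homN N" and f: "f \<in> dual_ball N"
  shows "\<bar>f v\<bar> \<le> N v"
proof -
  have "\<bar>f v\<bar> \<le> dual_norm N f * N v" using bw_bound[OF N] f unfolding dual_ball_def by blast
  also have "\<dots> \<le> 1 * N v" using f homN_nonneg[OF N, of v] unfolding dual_ball_def
    by (intro mult_right_mono) auto
  finally show ?thesis by simp
qed

lemma ball_lin: "f \<in> dual_ball N \<Longrightarrow> linear f"
  unfolding dual_ball_def bounded_wrt_def by blast

lemma ball_intro:
  assumes N: "homN N" and "linear f" "\<And>v. \<bar>f v\<bar> \<le> N v"
  shows "f \<in> dual_ball N"
proof -
  have "bounded_wrt N f" unfolding bounded_wrt_def using assms by (intro conjI exI[of _ 1]) auto
  moreover have "dual_norm N f \<le> 1" using assms by (intro dn_le) (auto intro: order.trans)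
  ultimately show ?thesis unfolding dual_ball_def by blast
qed

lemma diam_eq2:
  assumes N: "homN N" and S: "S \<subseteq> dual_ball N" "S \<noteq> {}"
    and E: "\<And>\<epsilon>. \<epsilon> > 0 \<Longrightarrow> \<exists>f\<in>S. \<exists>g\<in>S. \<exists>x. N x \<le> 1 \<and> f x - g x > 2 - \<epsilon>"
  shows "dual_diam N S = 2"
proof -
  define T where "T = (\<lambda>(f,g). dual_norm N (\<lambda>x. f x - g x)) ` (S \<times> S)"
  have dd: "dual_diam N S = Sup T" unfolding dual_diam_def T_def by simp
  have b2: "\<bar>f x - g x\<bar> \<le> 2" if "f \<in> S" "g \<in> S" "N x \<le> 1" for f g x
  proof -
    have "\<bar>f x\<bar> \<le> N x" "\<bar>g x\<bar> \<le> N x" using ball_bound[OF N] that S by blast+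
    then show ?thesis using that(3) by arith
  qed
  have T2: "t \<le> 2" if "t \<in> T" for t
    using that b2 unfolding T_def by (auto intro!: dn_le[OF N])
  have Tne: "T \<noteq> {}" using S unfolding T_def by auto
  have bdd: "bdd_above T" using T2 by (auto simp: bdd_above_def)
  have le: "Sup T \<le> 2" using Tne T2 by (intro cSup_least) auto
  have ge: "Sup T \<ge> 2"
  proof (rule ccontr)
    assume "\<not> Sup T \<ge> 2"
    then obtain f g x where fg: "f \<in> S" "g \<in> S" "N x \<le> 1" "f x - g x > 2 - (2 - Sup T)"
      using E[of "2 - Sup T"] by auto
    have "f x - g x \<le> dual_norm N (\<lambda>x. f x - g x)"
      using dn_ge'[OF N, of "\<lambda>x. f x - g x" 2 x] b2[OF fg(1,2)] fg(3) by auto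
    also have "\<dots> \<le> Sup T" using fg bdd unfolding T_def by (intro cSup_upper) auto
    finally show False using fg(4) by simp
  qed
  show ?thesis using le ge dd by simp
qed

lemma diam_get:
  assumes N: "homN N" and S: "S \<subseteq> dual_ball N" "S \<noteq> {}" and D: "dual_diam N S = 2"
    and e: "\<epsilon> > 0"
  shows "\<exists>f\<in>S. \<exists>g\<in>S. \<exists>x. N x \<le> 1 \<and> f x - g x > 2 - \<epsilon>"
proof -
  define T where "T = (\<lambda>(f,g). dual_norm N (\<lambda>x. f x - g x)) ` (S \<times> S)"
  have dd: "Sup T = 2" using D unfolding dual_diam_def T_def by simp
  have b2: "\<bar>f x - g x\<bar> \<le> 2" if "f \<in> S" "g \<in> S" "N x \<le> 1" for f g x
  proof -
    have "\<bar>f x\<bar> \<le> N x" "\<bar>g x\<bar> \<le> N x" using ball_bound[OF N] that S by blast+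
    then show ?thesis using that(3) by arith
  qed
  have T2: "t \<le> 2" if "t \<in> T" for t
    using that b2 unfolding T_def by (auto intro!: dn_le[OF N])
  have Tne: "T \<noteq> {}" using S unfolding T_def by auto
  have bdd: "bdd_above T" using T2 by (auto simp: bdd_above_def)
  have "2 - \<epsilon>/2 < Sup T" using dd e by simp
  then obtain t where "t \<in> T" "2 - \<epsilon>/2 < t" using less_cSup_iff[OF Tne bdd] by blast
  then obtain f g where fg: "f \<in> S" "g \<in> S" "2 - \<epsilon>/2 < dual_norm N (\<lambda>x. f x - g x)"
    unfolding T_def by auto
  have ne2: "{x. N x \<le> 1} \<noteq> {}" using homN_zero[OF N] by (metis empty_iff mem_Collect_eq zero_le_one)
  have bdd2: "bdd_above ((\<lambda>x. \<bar>f x - g x\<bar>) ` {x. N x \<le> 1})"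
    using b2[OF fg(1,2)] by (auto simp: bdd_above_def)
  obtain x where x: "N x \<le> 1" "2 - \<epsilon>/2 < \<bar>f x - g x\<bar>"
    using fg(3) less_cSUP_iff[OF ne2 bdd2] unfolding dual_norm_def by auto
  have lf: "linear f" "linear g" using fg S ball_lin by blast+
  show ?thesis
  proof (cases "f x - g x \<ge> 0")
    case True then show ?thesis using x fg e by (intro bexI[OF _ fg(1)] bexI[OF _ fg(2)] exI[of _ x]) auto
  next
    case False
    have "f (-x) - g (-x) = - (f x - g x)" using linear_neg[OF lf(1)] linear_neg[OF lf(2)] by simp
    then show ?thesis using x fg e False homN_neg[OF N, of x]
      by (intro bexI[OF _ fg(1)] bexI[OF _ fg(2)] exI[of _ "-x"]) auto
  qed
qed



lemma phi_zero1: "1 \<le> p \<Longrightarrow> 0 \<le> b \<Longrightarrow> phi p 0 b = b"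
proof (cases "p = \<infinity>")
  case False
  assume "1 \<le> p" "0 \<le> b"
  then have r: "1 \<le> real_of_ereal p" using preal False by blast
  then show ?thesis using False \<open>0 \<le> b\<close> by (simp add: phi_psi psi_def powr_powr)
qed (auto simp: phi_inf)

lemma homN_psum: "1 \<le> p \<Longrightarrow> homN (psum_norm p :: ('a::real_normed_vector \<times> 'b::real_normed_vector) \<Rightarrow> real)"
  unfolding homN_def psum_norm_phi by (auto simp: phi_homog phi_nonneg)

lemma psum_fst: "1 \<le> p \<Longrightarrow> norm (fst v) \<le> psum_norm p v"
  unfolding psum_norm_phi by (rule phi_ge1) auto

lemma psum_snd: "1 \<le> p \<Longrightarrow> norm (snd v) \<le> psum_norm p v"
  unfolding psum_norm_phi by (rule phi_ge2) auto

lemma psum_x0: "1 \<le> p \<Longrightarrow> psum_norm p (x, 0) = norm x"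
  unfolding psum_norm_phi by (simp add: phi_zero2)

lemma lin_pair:
  assumes "linear f" "linear g"
  shows "linear (\<lambda>w. a * f (fst w) + b * (g (snd w) :: real))"
  by (rule linearI) (auto simp: linear_add[OF assms(1)] linear_add[OF assms(2)]
      lin_scale[OF assms(1)] lin_scale[OF assms(2)] algebra_simps)

lemma lin_fst:
  assumes "linear f"
  shows "linear (\<lambda>w. (f (fst w) :: real))"
  by (rule linearI) (auto simp: linear_add[OF assms(1)] lin_scale[OF assms(1)])

lemma lin_r1:
  assumes "linear h"
  shows "linear (\<lambda>u. (h (u, 0) :: real))"
proof (rule linearI)
  fix u1 u2 show "h (u1 + u2, 0) = h (u1, 0) + h (u2, 0)"
    using linear_add[OF assms, of "(u1,0)" "(u2,0)"] by simp
next
  fix c u show "h (c *\<^sub>R u, 0) = c *\<^sub>R h (u, 0)"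
    using linear_scale[OF assms, of c "(u,0)"] by simp
qed

lemma lin_r2:
  assumes "linear h"
  shows "linear (\<lambda>v. (h (0, v) :: real))"
proof (rule linearI)
  fix u1 u2 show "h (0, u1 + u2) = h (0, u1) + h (0, u2)"
    using linear_add[OF assms, of "(0,u1)" "(0,u2)"] by simp
next
  fix c u show "h (0, c *\<^sub>R u) = c *\<^sub>R h (0, u)"
    using linear_scale[OF assms, of c "(0,u)"] by simp
qed

lemma lin_split:
  assumes "linear h"
  shows "h (u, v) = h (u, 0) + (h (0, v) :: real)"
  using linear_add[OF assms, of "(u,0)" "(0,v)"] by simp

lemma slice_ne_norm:
  fixes z :: "'a::real_normed_vector"
  assumes "norm z = 1" "\<alpha> > 0"
  shows "wstar_slice norm z \<alpha> \<noteq> {}"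
proof -
  obtain f where f: "linear f" "\<And>v. \<bar>f v\<bar> \<le> norm v" "f z = norm z"
    using norming_functional[of z] by blast
  have "f \<in> dual_ball norm" using ball_intro[OF homN_norm f(1)] f(2) by blast
  then have "f \<in> wstar_slice norm z \<alpha>" unfolding wstar_slice_def using f(3) assms by simp
  then show ?thesis by blast
qed

lemma ld2p_get:
  fixes x :: "'a::real_normed_vector"
  assumes LD: "wstar_LD2P (norm::'a\<Rightarrow>real)" and nt: "\<exists>e::'a. e \<noteq> 0" and d: "\<delta> > 0" and e: "\<eta> > 0"
  shows "\<exists>f1 f2 u. f1 \<in> dual_ball norm \<and> f2 \<in> dual_ball norm \<and> f1 x > norm x - \<delta>
     \<and> f2 x > norm x - \<delta> \<and> norm u \<le> 1 \<and> f1 u - f2 u > 2 - \<eta>"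
proof -
  have step: "\<exists>f1 f2 u. f1 \<in> dual_ball norm \<and> f2 \<in> dual_ball norm \<and> f1 z > 1 - \<beta>
     \<and> f2 z > 1 - \<beta> \<and> norm u \<le> 1 \<and> f1 u - f2 u > 2 - \<eta>" if z: "norm z = 1" "\<beta> > 0" for z :: 'a and \<beta>
  proof -
    let ?S = "wstar_slice norm z \<beta>"
    have D: "dual_diam norm ?S = 2" using LD z unfolding wstar_LD2P_def by blast
    have sub: "?S \<subseteq> dual_ball norm" unfolding wstar_slice_def by blast
    obtain f g u where "f \<in> ?S" "g \<in> ?S" "norm u \<le> 1" "f u - g u > 2 - \<eta>"
      using diam_get[OF homN_norm sub slice_ne_norm[OF z] D e] by blast
    then show ?thesis unfolding wstar_slice_def by blast
  qed
  show ?thesis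
  proof (cases "x = 0")
    case True
    obtain e0 :: 'a where "e0 \<noteq> 0" using nt by blast
    then have n1: "norm ((1 / norm e0) *\<^sub>R e0) = 1" by simp
    obtain f1 f2 :: "'a \<Rightarrow> real" and u :: 'a where fs: "f1 \<in> dual_ball norm" "f2 \<in> dual_ball norm" "norm u \<le> 1" "f1 u - f2 u > 2 - \<eta>"
      using step[OF n1, of 1] by auto
    have "f1 x = 0" "f2 x = 0" using True linear_0[OF ball_lin[OF fs(1)]] linear_0[OF ball_lin[OF fs(2)]] by simp_all
    then show ?thesis using fs d True by (intro exI[of _ f1] exI[of _ f2] exI[of _ u]) auto
  next
    case False
    define z where "z = (1 / norm x) *\<^sub>R x"
    have nz: "norm z = 1" using False unfolding z_def by simp
    have b: "\<delta> / norm x > 0" using False d by simp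
    obtain f1 f2 u where fs: "f1 \<in> dual_ball norm" "f2 \<in> dual_ball norm" "f1 z > 1 - \<delta> / norm x"
      "f2 z > 1 - \<delta> / norm x" "norm u \<le> 1" "f1 u - f2 u > 2 - \<eta>"
      using step[OF nz b] by blast
    have xz: "x = norm x *\<^sub>R z" using False unfolding z_def by simp
    have "f x > norm x - \<delta>" if "f \<in> dual_ball norm" "f z > 1 - \<delta> / norm x" for f
    proof -
      have "f x = norm x * f z" using lin_scale[OF ball_lin[OF that(1)], of "norm x" z] xz by simp
      moreover have "norm x * f z > norm x * (1 - \<delta> / norm x)"
        using that(2) False by (intro mult_strict_left_mono) auto
      moreover have "norm x * (1 - \<delta> / norm x) = norm x - \<delta>" using False by (simp add: field_simps)
      ultimately show ?thesis by simp
    qed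
    then show ?thesis using fs by (intro exI[of _ f1] exI[of _ f2] exI[of _ u]) auto
  qed
qed



lemma partA:
  assumes LD: "wstar_LD2P (norm :: 'a::real_normed_vector \<Rightarrow> real)" and nt: "\<exists>e::'a. e \<noteq> 0"
  shows "wstar_LD2P (psum_norm 1 :: 'a \<times> 'b::real_normed_vector \<Rightarrow> real)"
  unfolding wstar_LD2P_def
proof (intro allI impI)
  fix z :: "'a \<times> 'b" and \<alpha> :: real
  assume z: "psum_norm 1 z = 1" and a: "\<alpha> > 0"
  let ?N = "psum_norm 1 :: 'a \<times> 'b \<Rightarrow> real"
  have hN: "homN ?N" by (rule homN_psum) simp
  obtain x y where xy: "z = (x, y)" by (cases z)
  have N1: "?N w = norm (fst w) + norm (snd w)" for w
    unfolding psum_norm_phi by (simp add: phi_one')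
  have nxy: "norm x + norm y = 1" using z N1[of z] xy by simp
  obtain g where g: "linear g" "\<And>v. \<bar>g v\<bar> \<le> norm v" "g y = norm y"
    using norming_functional[of y] by blast
  let ?S = "wstar_slice ?N z \<alpha>"
  have E: "\<exists>f\<in>?S. \<exists>h\<in>?S. \<exists>w. ?N w \<le> 1 \<and> f w - h w > 2 - \<epsilon>" if e: "\<epsilon> > 0" for \<epsilon>
  proof -
    obtain f1 f2 :: "'a \<Rightarrow> real" and u :: 'a where fs: "f1 \<in> dual_ball norm" "f2 \<in> dual_ball norm"
      "f1 x > norm x - \<alpha>" "f2 x > norm x - \<alpha>" "norm u \<le> 1" "f1 u - f2 u > 2 - \<epsilon>"
      using ld2p_get[OF LD nt a e, of x] by blast
    define H where "H f = (\<lambda>w. 1 * f (fst w) + 1 * g (snd w))" for f :: "'a \<Rightarrow> real"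
    have inS: "H f \<in> ?S" if f: "f \<in> dual_ball norm" "f x > norm x - \<alpha>" for f
    proof -
      have "H f \<in> dual_ball ?N"
      proof (rule ball_intro[OF hN])
        show "linear (H f)" unfolding H_def by (rule lin_pair[OF ball_lin[OF f(1)] g(1)])
        fix w :: "'a \<times> 'b"
        have "\<bar>f (fst w)\<bar> \<le> norm (fst w)" using ball_bound[OF homN_norm f(1)] .
        then show "\<bar>H f w\<bar> \<le> ?N w" unfolding H_def N1 using g(2)[of "snd w"] by arith
      qed
      moreover have "H f z > 1 - \<alpha>" unfolding H_def xy using f(2) g(3) nxy by simp
      ultimately show ?thesis unfolding wstar_slice_def by blast
    qed
    have "?N (u, 0) \<le> 1" using N1 fs(5) by simp
    moreover have "H f1 (u,0) - H f2 (u,0) > 2 - \<epsilon>" unfolding H_def using fs(6) by simp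
    ultimately show ?thesis using inS[OF fs(1,3)] inS[OF fs(2,4)] by blast
  qed
  have sub: "?S \<subseteq> dual_ball ?N" unfolding wstar_slice_def by blast
  have ne: "?S \<noteq> {}" using E[of 1] by auto
  show "dual_diam ?N ?S = 2" by (rule diam_eq2[OF hN sub ne E])
qed



lemma partB:
  assumes LDX: "wstar_LD2P (norm :: 'a::real_normed_vector \<Rightarrow> real)" and ntX: "\<exists>e::'a. e \<noteq> 0"
    and LDY: "wstar_LD2P (norm :: 'b::real_normed_vector \<Rightarrow> real)" and ntY: "\<exists>e::'b. e \<noteq> 0"
    and p: "1 < p"
  shows "wstar_LD2P (psum_norm p :: 'a \<times> 'b \<Rightarrow> real)"
  unfolding wstar_LD2P_def
proof (intro allI impI)
  fix z :: "'a \<times> 'b" and \<alpha> :: real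
  let ?N = "psum_norm p :: 'a \<times> 'b \<Rightarrow> real"
  assume z: "?N z = 1" and al: "\<alpha> > 0"
  have p1: "1 \<le> p" using p by simp
  have hN: "homN ?N" by (rule homN_psum[OF p1])
  obtain x y where xy: "z = (x, y)" by (cases z)
  have phixy: "phi p (norm x) (norm y) = 1" using z xy psum_norm_phi[of p z] by simp
  obtain a b where ab: "0 \<le> a" "0 \<le> b" "a * norm x + b * norm y = 1"
    "\<And>c d. 0 \<le> c \<Longrightarrow> 0 \<le> d \<Longrightarrow> a * c + b * d \<le> phi p c d"
    using phi_dual[OF p _ _ phixy] by auto
  have a1: "a \<le> 1" using ab(4)[of 1 0] phi_zero2[OF p1, of 1] by simp
  have b1: "b \<le> 1" using ab(4)[of 0 1] phi_zero1[OF p1, of 1] by simp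
  let ?S = "wstar_slice ?N z \<alpha>"
  have E: "\<exists>f\<in>?S. \<exists>h\<in>?S. \<exists>w. ?N w \<le> 1 \<and> f w - h w > 2 - \<epsilon>" if e: "\<epsilon> > 0" for \<epsilon>
  proof -
    have d: "\<alpha>/4 > 0" using al by simp
    have e2: "\<epsilon>/2 > 0" using e by simp
    obtain f1 f2 :: "'a \<Rightarrow> real" and u :: 'a where fs: "f1 \<in> dual_ball norm" "f2 \<in> dual_ball norm"
      "f1 x > norm x - \<alpha>/4" "f2 x > norm x - \<alpha>/4" "norm u \<le> 1" "f1 u - f2 u > 2 - \<epsilon>/2"
      using ld2p_get[OF LDX ntX d e2, of x] by blast
    obtain g1 g2 :: "'b \<Rightarrow> real" and v :: 'b where gs: "g1 \<in> dual_ball norm" "g2 \<in> dual_ball norm"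
      "g1 y > norm y - \<alpha>/4" "g2 y > norm y - \<alpha>/4" "norm v \<le> 1" "g1 v - g2 v > 2 - \<epsilon>/2"
      using ld2p_get[OF LDY ntY d e2, of y] by blast
    define H where "H f g = (\<lambda>w. a * f (fst w) + b * g (snd w))" for f :: "'a \<Rightarrow> real" and g :: "'b \<Rightarrow> real"
    have inS: "H f g \<in> ?S" if f: "f \<in> dual_ball norm" "f x > norm x - \<alpha>/4"
      and g: "g \<in> dual_ball norm" "g y > norm y - \<alpha>/4" for f g
    proof -
      have "H f g \<in> dual_ball ?N"
      proof (rule ball_intro[OF hN])
        show "linear (H f g)" unfolding H_def by (rule lin_pair[OF ball_lin[OF f(1)] ball_lin[OF g(1)]])
        fix w :: "'a \<times> 'b"
        have "\<bar>f (fst w)\<bar> \<le> norm (fst w)" using ball_bound[OF homN_norm f(1)] .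
        moreover have "\<bar>g (snd w)\<bar> \<le> norm (snd w)" using ball_bound[OF homN_norm g(1)] .
        ultimately have t1: "\<bar>a * f (fst w)\<bar> \<le> a * norm (fst w)" "\<bar>b * g (snd w)\<bar> \<le> b * norm (snd w)"
          using ab(1,2) by (simp_all add: abs_mult mult_left_mono)
        have "\<bar>H f g w\<bar> \<le> \<bar>a * f (fst w)\<bar> + \<bar>b * g (snd w)\<bar>" unfolding H_def by (rule abs_triangle_ineq)
        also have "\<dots> \<le> a * norm (fst w) + b * norm (snd w)" using t1 by (rule add_mono)
        also have "\<dots> \<le> ?N w" unfolding psum_norm_phi by (rule ab(4)) auto
        finally show "\<bar>H f g w\<bar> \<le> ?N w" .
      qed
      moreover have "H f g z > 1 - \<alpha>"
      proof -
        have "a * f x \<ge> a * (norm x - \<alpha>/4)" using f(2) ab(1) by (intro mult_left_mono) auto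
        moreover have "b * g y \<ge> b * (norm y - \<alpha>/4)" using g(2) ab(2) by (intro mult_left_mono) auto
        moreover have "a * (norm x - \<alpha>/4) + b * (norm y - \<alpha>/4) = 1 - (a + b) * (\<alpha>/4)"
          using ab(3) by (simp add: algebra_simps)
        moreover have "(a + b) * (\<alpha>/4) \<le> 2 * (\<alpha>/4)" using a1 b1 al by (intro mult_right_mono) auto
        moreover have "H f g z = a * f x + b * g y" unfolding H_def xy by simp
        ultimately show ?thesis using al by linarith
      qed
      ultimately show ?thesis unfolding wstar_slice_def by blast
    qed
    define w where "w = (norm x *\<^sub>R u, norm y *\<^sub>R v)"
    have "?N w = phi p (norm x * norm u) (norm y * norm v)" unfolding w_def psum_norm_phi by simp
    also have "\<dots> \<le> phi p (norm x) (norm y)"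
      using fs(5) gs(5) by (intro phi_mono[OF p1]) (auto intro: mult_left_le)
    finally have nw: "?N w \<le> 1" using phixy by simp
    have lf: "linear f1" "linear f2" "linear g1" "linear g2" using fs gs ball_lin by blast+
    have "H f1 g1 w - H f2 g2 w = (a * norm x) * (f1 u - f2 u) + (b * norm y) * (g1 v - g2 v)"
      unfolding H_def w_def using lin_scale[OF lf(1)] lin_scale[OF lf(2)] lin_scale[OF lf(3)] lin_scale[OF lf(4)]
      by (simp add: algebra_simps)
    also have "\<dots> \<ge> (a * norm x) * (2 - \<epsilon>/2) + (b * norm y) * (2 - \<epsilon>/2)"
      using fs(6) gs(6) ab(1,2) by (intro add_mono mult_left_mono) auto
    also have "(a * norm x) * (2 - \<epsilon>/2) + (b * norm y) * (2 - \<epsilon>/2) = (a * norm x + b * norm y) * (2 - \<epsilon>/2)"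
      by (simp only: distrib_right)
    also have "\<dots> = 2 - \<epsilon>/2" using ab(3) by simp
    finally have "H f1 g1 w - H f2 g2 w \<ge> 2 - \<epsilon>/2" .
    then have "H f1 g1 w - H f2 g2 w > 2 - \<epsilon>" using e by simp
    then show ?thesis using inS[OF fs(1,3) gs(1,3)] inS[OF fs(2,4) gs(2,4)] nw by blast
  qed
  have sub: "?S \<subseteq> dual_ball ?N" unfolding wstar_slice_def by blast
  have ne: "?S \<noteq> {}" using E[of 1] by auto
  show "dual_diam ?N ?S = 2" by (rule diam_eq2[OF hN sub ne E])
qed



lemma partC:
  assumes LD: "wstar_LD2P (psum_norm p :: 'a::real_normed_vector \<times> 'b::real_normed_vector \<Rightarrow> real)"
    and p: "1 < p"
  shows "wstar_LD2P (norm :: 'a \<Rightarrow> real)"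
  unfolding wstar_LD2P_def
proof (intro allI impI)
  fix x :: 'a and \<alpha> :: real
  assume x: "norm x = 1" and al: "\<alpha> > 0"
  let ?N = "psum_norm p :: 'a \<times> 'b \<Rightarrow> real"
  have p1: "1 \<le> p" using p by simp
  have hN: "homN ?N" by (rule homN_psum[OF p1])
  let ?S = "wstar_slice norm x \<alpha>"
  have E: "\<exists>f\<in>?S. \<exists>h\<in>?S. \<exists>u. norm u \<le> 1 \<and> f u - h u > 2 - \<epsilon>" if e: "\<epsilon> > 0" for \<epsilon>
  proof -
    define \<eta> where "\<eta> = \<epsilon> / 5"
    have eta: "\<eta> > 0" using e unfolding \<eta>_def by simp
    obtain t where t: "0 < t" "t \<le> 1" "\<And>s. 0 \<le> s \<Longrightarrow> s \<le> t \<Longrightarrow> phi p 1 s \<le> 1 + \<eta> * t"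
      using phi_small[OF p eta] by blast
    define \<delta> where "\<delta> = min \<alpha> (\<eta> * t)"
    have dpos: "\<delta> > 0" using al eta t unfolding \<delta>_def by simp
    define z :: "'a \<times> 'b" where "z = (x, 0)"
    have "?N (x, 0) = norm x" by (rule psum_x0[OF p1])
    then have nz: "?N z = 1" unfolding z_def using x by simp
    let ?T = "wstar_slice ?N z \<delta>"
    have subT: "?T \<subseteq> dual_ball ?N" unfolding wstar_slice_def by blast
    have neT: "?T \<noteq> {}"
    proof -
      obtain f where f: "linear f" "\<And>v. \<bar>f v\<bar> \<le> norm v" "f x = norm x"
        using norming_functional[of x] by blast
      have "(\<lambda>w. f (fst w)) \<in> dual_ball ?N"
      proof (rule ball_intro[OF hN lin_fst[OF f(1)]])
        fix w :: "'a \<times> 'b" show "\<bar>f (fst w)\<bar> \<le> ?N w" using f(2)[of "fst w"] psum_fst[OF p1, of w] by linarith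
      qed
      then have "(\<lambda>w. f (fst w)) \<in> ?T" unfolding wstar_slice_def z_def using f(3) x dpos by simp
      then show ?thesis by blast
    qed
    have LD': "\<And>z \<alpha>. ?N z = 1 \<Longrightarrow> \<alpha> > 0 \<Longrightarrow> dual_diam ?N (wstar_slice ?N z \<alpha>) = 2"
      using LD unfolding wstar_LD2P_def by blast
    have DT: "dual_diam ?N ?T = 2" by (rule LD'[OF nz dpos])
    obtain h1 h2 w where hs: "h1 \<in> ?T" "h2 \<in> ?T" "?N w \<le> 1" "h1 w - h2 w > 2 - \<eta>"
      using diam_get[OF hN subT neT DT eta] by blast
    have hb: "h \<in> dual_ball ?N" if "h \<in> ?T" for h using that subT by blast
    have hz: "h z > 1 - \<delta>" if "h \<in> ?T" for h using that unfolding wstar_slice_def by blast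
    have fin: "(\<lambda>u. h (u, 0)) \<in> ?S" if "h \<in> ?T" for h
    proof -
      have "(\<lambda>u. h (u, 0)) \<in> dual_ball norm"
      proof (rule ball_intro[OF homN_norm lin_r1[OF ball_lin[OF hb[OF that]]]])
        fix u :: 'a
        have "?N (u, 0) = norm u" by (rule psum_x0[OF p1])
        then show "\<bar>h (u, 0)\<bar> \<le> norm u"
          using ball_bound[OF hN hb[OF that], of "(u, 0)"] by simp
      qed
      moreover have "h (x, 0) > 1 - \<alpha>" using hz[OF that] unfolding z_def \<delta>_def by linarith
      ultimately show ?thesis unfolding wstar_slice_def by blast
    qed
    have gsmall: "\<bar>h (0, v)\<bar> < 2 * \<eta>" if h: "h \<in> ?T" and v: "norm v \<le> 1" for h v
    proof -
      have lh: "linear h" using ball_lin[OF hb[OF h]] .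
      have one: "h (0, v) < 2 * \<eta>" if v: "norm v \<le> 1" for v
      proof -
        have "h (x, t *\<^sub>R v) \<le> ?N (x, t *\<^sub>R v)" using ball_bound[OF hN hb[OF h], of "(x, t *\<^sub>R v)"] by linarith
        also have "\<dots> = phi p 1 (t * norm v)" unfolding psum_norm_phi using x t by simp
        also have "\<dots> \<le> 1 + \<eta> * t"
        proof (rule t(3))
          show "0 \<le> t * norm v" using t(1) by simp
          show "t * norm v \<le> t" using mult_left_le[OF v, of t] t(1) by simp
        qed
        finally have A: "h (x, t *\<^sub>R v) \<le> 1 + \<eta> * t" .
        have "h (x, t *\<^sub>R v) = h (x, 0) + h (0, t *\<^sub>R v)" by (rule lin_split[OF lh])
        also have "h (0, t *\<^sub>R v) = t * h (0, v)" using lin_scale[OF lin_r2[OF lh], of t v] by simp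
        finally have B: "h (x, t *\<^sub>R v) = h (x, 0) + t * h (0, v)" .
        have C: "h (x, 0) > 1 - \<eta> * t" using hz[OF h] unfolding z_def \<delta>_def by linarith
        have "t * (2 * \<eta>) = 2 * (\<eta> * t)" by simp
        then have "t * h (0, v) < t * (2 * \<eta>)" using A B C by linarith
        then show ?thesis using t(1) by simp
      qed
      have "h (0, - v) = - h (0, v)" using linear_neg[OF lin_r2[OF lh], of v] by simp
      then show ?thesis using one[OF v] one[of "-v"] v by auto
    qed
    obtain w1 w2 where w: "w = (w1, w2)" by (cases w)
    have n1: "norm w1 \<le> 1" using psum_fst[OF p1, of w] hs(3) w by simp
    have n2: "norm w2 \<le> 1" using psum_snd[OF p1, of w] hs(3) w by simp
    have "h1 w = h1 (w1, 0) + h1 (0, w2)" "h2 w = h2 (w1, 0) + h2 (0, w2)"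
      unfolding w by (rule lin_split[OF ball_lin[OF hb[OF hs(1)]]], rule lin_split[OF ball_lin[OF hb[OF hs(2)]]])
    moreover have "\<bar>h1 (0, w2)\<bar> < 2 * \<eta>" "\<bar>h2 (0, w2)\<bar> < 2 * \<eta>"
      using gsmall[OF hs(1) n2] gsmall[OF hs(2) n2] by simp_all
    ultimately have "h1 (w1, 0) - h2 (w1, 0) > 2 - \<epsilon>" using hs(4) unfolding \<eta>_def by linarith
    then show ?thesis using n1
      by (intro bexI[OF _ fin[OF hs(1)]] bexI[OF _ fin[OF hs(2)]] exI[of _ w1]) simp
  qed
  have sub: "?S \<subseteq> dual_ball norm" unfolding wstar_slice_def by blast
  have ne: "?S \<noteq> {}" using slice_ne_norm[OF x al] .
  show "dual_diam norm ?S = 2" by (rule diam_eq2[OF homN_norm sub ne E])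
qed


theorem corollary4p4:
  fixes X :: "'a::banach itself" and Y :: "'b::banach itself"
  assumes "\<exists>x::'a. x \<noteq> 0" and "\<exists>y::'b. y \<noteq> 0"
  shows "(wstar_LD2P (norm :: 'a \<Rightarrow> real) \<longrightarrow>
            wstar_LD2P (psum_norm 1 :: 'a \<times> 'b \<Rightarrow> real))
       \<and> (\<forall>p::ereal. 1 < p \<and> p \<le> \<infinity> \<longrightarrow>
            wstar_LD2P (norm :: 'a \<Rightarrow> real) \<longrightarrow> wstar_LD2P (norm :: 'b \<Rightarrow> real) \<longrightarrow>
            wstar_LD2P (psum_norm p :: 'a \<times> 'b \<Rightarrow> real))
       \<and> (\<forall>p::ereal. 1 < p \<and> p \<le> \<infinity> \<longrightarrow>
            wstar_LD2P (psum_norm p :: 'a \<times> 'b \<Rightarrow> real) \<longrightarrow>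
            wstar_LD2P (norm :: 'a \<Rightarrow> real))"
proof -
  have A: "wstar_LD2P (norm :: 'a \<Rightarrow> real) \<longrightarrow> wstar_LD2P (psum_norm 1 :: 'a \<times> 'b \<Rightarrow> real)"
    using partA[OF _ assms(1)] by blast
  have B: "\<forall>p::ereal. 1 < p \<and> p \<le> \<infinity> \<longrightarrow>
            wstar_LD2P (norm :: 'a \<Rightarrow> real) \<longrightarrow> wstar_LD2P (norm :: 'b \<Rightarrow> real) \<longrightarrow>
            wstar_LD2P (psum_norm p :: 'a \<times> 'b \<Rightarrow> real)"
    using partB[OF _ assms(1) _ assms(2)] by blast
  have C: "\<forall>p::ereal. 1 < p \<and> p \<le> \<infinity> \<longrightarrow>
            wstar_LD2P (psum_norm p :: 'a \<times> 'b \<Rightarrow> real) \<longrightarrow>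
            wstar_LD2P (norm :: 'a \<Rightarrow> real)"
    using partC by blast
  show ?thesis using A B C by blast
qed

end
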